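(* Let $\mathcal{X},\mathcal{Y},\mathcal{Z}$ be sets, $\mathcal{G}$ a measurable space of maps $\mathcal{X}\to\mathcal{Z}$, $\mathcal{H}$ a set of maps $\mathcal{Z}\to\mathbb{R}$, and let the loss $\ell(\cdot,y)$ be convex in its first argument for every $y$. Fix arbitrary datasets $\mathcal{S}_t=((x_{t,1},y_{t,1}),\dots,(x_{t,m_t},y_{t,m_t}))$, $t=1,\dots,T$. Assume that for every $t$ and $g\in\mathcal{G}$, $0\le\hat L_t(g)\le C$ and $\mathcal{R}_t(g)\le\beta(g,m_t)$. Then the predictions $\hat y_{t,i}$ of the Integrated EWA-LL algorithm with prior $\pi_1$ and parameter $\eta>0$ satisfy $$\frac1T\sum_{t=1}^T\frac1{m_t}\sum_{i=1}^{m_t}\ell(\hat y_{t,i},y_{t,i})\le\inf_\rho\Bigg\{\mathbb{E}_{g\sim\rho}\Bigg[\frac1T\sum_{t=1}^T\inf_{h_t\in\mathcal{H}}\frac1{m_t}\sum_{i=1}^{m_t}\ell\big(h_t\circ g(x_{t,i}),y_{t,i}\big)+\frac1T\sum_{t=1}^T\beta(g,m_t)\Bigg]+\frac{\eta C^2}{8}+\frac{\mathcal{K}(\rho,\pi_1)}{\eta T}\Bigg\},$$ the infimum being over all probability measures $\rho$ on $\mathcal{G}$, with $\mathcal{K}$ the Kullback–Leibler divergence.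
   Context: Within-task algorithm: for each task $t$ and each $g\in\mathcal{G}$, an online algorithm processes $\mathcal{S}_t$ sequentially, producing at step $i$ a real prediction $\hat y^g_{t,i}$ depending only on $g$, $x_{t,1},\dots,x_{t,i}$, $y_{t,1},\dots,y_{t,i-1}$. Let $\hat L_t(g)=\frac1{m_t}\sum_{i=1}^{m_t}\ell(\hat y^g_{t,i},y_{t,i})$ and $\mathcal{R}_t(g)=\hat L_t(g)-\inf_{h\in\mathcal{H}}\frac1{m_t}\sum_{i=1}^{m_t}\ell(h\circ g(x_{t,i}),y_{t,i})$ (all maps assumed measurable/integrable in $g$). Integrated EWA-LL: given a prior probability $\pi_1$ on $\mathcal{G}$ and $\eta>0$, for $t=1,\dots,T$: run the within-task algorithm on $\mathcal{S}_t$ for every $g\in\mathcal{G}$ and predict $\hat y_{t,i}=\int\hat y^g_{t,i}\,\pi_t(\mathrm{d}g)$; then set $\pi_{t+1}(\mathrm{d}g)=\exp(-\eta\hat L_t(g))\pi_t(\mathrm{d}g)/\int\exp(-\eta\hat L_t(\gamma))\pi_t(\mathrm{d}\gamma)$. *)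

theory Defs
  imports "HOL-Probability.Probability"
begin

text \<open>Kullback-Leibler divergence K(rho, pi) = int log (d rho / d pi) d rho, valued in
  [0, infinity]; it is infinite when rho is not absolutely continuous w.r.t. pi or when
  the log-density is not rho-integrable (the library's KL_divergence is real-valued and
  only meaningful in the finite case).\<close>
definition KL_div :: "'a measure \<Rightarrow> 'a measure \<Rightarrow> ereal" where
  "KL_div \<rho> \<pi> =
     (if sets \<rho> = sets \<pi> \<and> absolutely_continuous \<pi> \<rho>
         \<and> integrable \<rho> (entropy_density (exp 1) \<pi> \<rho>)
      then ereal (KL_divergence (exp 1) \<pi> \<rho>) else \<infinity>)"

definition within_pred ::
  "(('x \<Rightarrow> 'z) \<Rightarrow> 'x list \<Rightarrow> 'y list \<Rightarrow> real) \<Rightarrow> (nat \<Rightarrow> nat \<Rightarrow> 'x) \<Rightarrow> (nat \<Rightarrow> nat \<Rightarrow> 'y)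
    \<Rightarrow> ('x \<Rightarrow> 'z) \<Rightarrow> nat \<Rightarrow> nat \<Rightarrow> real" where
  "within_pred alg x y g t i = alg g (map (x t) [1..<Suc i]) (map (y t) [1..<i])"

definition Lhat ::
  "(real \<Rightarrow> 'y \<Rightarrow> real) \<Rightarrow> (('x \<Rightarrow> 'z) \<Rightarrow> 'x list \<Rightarrow> 'y list \<Rightarrow> real)
    \<Rightarrow> (nat \<Rightarrow> nat \<Rightarrow> 'x) \<Rightarrow> (nat \<Rightarrow> nat \<Rightarrow> 'y) \<Rightarrow> (nat \<Rightarrow> nat) \<Rightarrow> ('x \<Rightarrow> 'z) \<Rightarrow> nat \<Rightarrow> real" where
  "Lhat loss alg x y m g t =
     (1 / real (m t)) * (\<Sum>i=1..m t. loss (within_pred alg x y g t i) (y t i))"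

definition best_in_H ::
  "(real \<Rightarrow> 'y \<Rightarrow> real) \<Rightarrow> ('z \<Rightarrow> real) set
    \<Rightarrow> (nat \<Rightarrow> nat \<Rightarrow> 'x) \<Rightarrow> (nat \<Rightarrow> nat \<Rightarrow> 'y) \<Rightarrow> (nat \<Rightarrow> nat) \<Rightarrow> ('x \<Rightarrow> 'z) \<Rightarrow> nat \<Rightarrow> ereal" where
  "best_in_H loss H x y m g t =
     (INF h\<in>H. ereal ((1 / real (m t)) * (\<Sum>i=1..m t. loss ((h \<circ> g) (x t i)) (y t i))))"

definition regret ::
  "(real \<Rightarrow> 'y \<Rightarrow> real) \<Rightarrow> (('x \<Rightarrow> 'z) \<Rightarrow> 'x list \<Rightarrow> 'y list \<Rightarrow> real) \<Rightarrow> ('z \<Rightarrow> real) set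
    \<Rightarrow> (nat \<Rightarrow> nat \<Rightarrow> 'x) \<Rightarrow> (nat \<Rightarrow> nat \<Rightarrow> 'y) \<Rightarrow> (nat \<Rightarrow> nat) \<Rightarrow> ('x \<Rightarrow> 'z) \<Rightarrow> nat \<Rightarrow> ereal" where
  "regret loss alg H x y m g t = ereal (Lhat loss alg x y m g t) - best_in_H loss H x y m g t"

definition ewa_update :: "'g measure \<Rightarrow> real \<Rightarrow> ('g \<Rightarrow> real) \<Rightarrow> 'g measure" where
  "ewa_update \<pi> \<eta> L =
     density \<pi> (\<lambda>g. ennreal (exp (- \<eta> * L g) / (\<integral>\<gamma>. exp (- \<eta> * L \<gamma>) \<partial>\<pi>)))"

text \<open>The sequence of priors pi_t (t = 1, 2, ...) of Integrated EWA-LL; index 0 unused.\<close>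
fun ewa_prior :: "'g measure \<Rightarrow> real \<Rightarrow> (nat \<Rightarrow> 'g \<Rightarrow> real) \<Rightarrow> nat \<Rightarrow> 'g measure" where
  "ewa_prior \<pi>1 \<eta> L 0 = \<pi>1"
| "ewa_prior \<pi>1 \<eta> L (Suc 0) = \<pi>1"
| "ewa_prior \<pi>1 \<eta> L (Suc (Suc t)) =
     ewa_update (ewa_prior \<pi>1 \<eta> L (Suc t)) \<eta> (L (Suc t))"

definition ewa_ll_pred ::
  "(real \<Rightarrow> 'y \<Rightarrow> real) \<Rightarrow> (('x \<Rightarrow> 'z) \<Rightarrow> 'x list \<Rightarrow> 'y list \<Rightarrow> real) \<Rightarrow> ('x \<Rightarrow> 'z) measure
    \<Rightarrow> real \<Rightarrow> (nat \<Rightarrow> nat \<Rightarrow> 'x) \<Rightarrow> (nat \<Rightarrow> nat \<Rightarrow> 'y) \<Rightarrow> (nat \<Rightarrow> nat) \<Rightarrow> nat \<Rightarrow> nat \<Rightarrow> real" where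
  "ewa_ll_pred loss alg \<pi>1 \<eta> x y m t i =
     (\<integral>g. within_pred alg x y g t i
        \<partial>(ewa_prior \<pi>1 \<eta> (\<lambda>s g. Lhat loss alg x y m g s) t))"

end

theory Submission
  imports Defs
begin


lemma dv_bound:
  fixes M \<rho> :: "'a measure" and h :: "'a \<Rightarrow> real"
  assumes M: "prob_space M" and R: "prob_space \<rho>" and sets: "sets \<rho> = sets M"
    and ac: "absolutely_continuous M \<rho>"
    and int: "integrable \<rho> (entropy_density (exp 1) M \<rho>)"
    and hm[measurable]: "h \<in> borel_measurable M" and hb: "\<And>g. g \<in> space M \<Longrightarrow> \<bar>h g\<bar> \<le> B"
  shows "(\<integral>g. h g \<partial>\<rho>) - KL_divergence (exp 1) M \<rho> \<le> ln (\<integral>g. exp (h g) \<partial>M)"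
proof -
  interpret M: prob_space M by fact
  interpret R: prob_space \<rho> by fact
  have fm: "finite_measure \<rho>" by unfold_locales
  obtain D where Dm[measurable]: "D \<in> borel_measurable M"
    and DRN: "AE x in M. RN_deriv M \<rho> x = ennreal (D x)"
    and Dpos: "AE x in \<rho>. 0 < D x" and Dnn: "\<And>x. 0 \<le> D x"
    using M.real_RN_deriv[OF fm ac sets] by blast
  have rho_eq: "\<rho> = density M D"
  proof -
    have "\<rho> = density M (RN_deriv M \<rho>)" using M.density_RN_deriv[OF ac sets] by simp
    also have "\<dots> = density M D" using DRN by (intro density_cong) auto
    finally show ?thesis .
  qed
  have ed: "AE x in \<rho>. entropy_density (exp 1) M \<rho> x = ln (D x)"
  proof -
    have "AE x in \<rho>. RN_deriv M \<rho> x = ennreal (D x)"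
      using absolutely_continuous_AE[OF sets ac DRN] .
    then show ?thesis by eventually_elim (simp add: entropy_density_def log_def Dnn)
  qed
  have intlnD: "integrable \<rho> (\<lambda>x. ln (D x))"
    using integrable_cong_AE[THEN iffD1, OF _ _ ed int] by (simp add: measurable_cong_sets[OF sets refl])
  have KLeq: "KL_divergence (exp 1) M \<rho> = (\<integral>x. ln (D x) \<partial>\<rho>)"
    unfolding KL_divergence_def using ed by (intro integral_cong_AE) (auto simp: measurable_cong_sets[OF sets refl])
  have hbd: "integrable M h" 
    by (rule M.integrable_const_bound[where B=B]) (auto intro!: AE_I2 simp: hb)
  have hbr: "integrable \<rho> h"
    by (rule R.integrable_const_bound[where B=B]) (auto intro!: AE_I2 simp: hb sets_eq_imp_space_eq[OF sets] measurable_cong_sets[OF sets refl])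
  have eint: "integrable M (\<lambda>g. exp (h g))"
    by (rule M.integrable_const_bound[where B="exp B"]) (auto intro!: AE_I2 abs_le_D1 hb)
  define Z where "Z = (\<integral>g. exp (h g) \<partial>M)"
  have Zpos: "Z > 0" unfolding Z_def
    using M.integral_less_AE_space[of "\<lambda>_. 0" "\<lambda>g. exp (h g)"] eint M.emeasure_space_1 by simp
  have rhom: "\<And>f. f \<in> borel_measurable \<rho> \<longleftrightarrow> f \<in> borel_measurable M"
    using measurable_cong_sets[OF sets refl, of borel] by blast
  define F where "F x = h x - ln (D x) - ln Z" for x
  have Fm[measurable]: "F \<in> borel_measurable M" unfolding F_def by measurable
  have Fint: "integrable \<rho> F" unfolding F_def using hbr intlnD by auto
  have FintM: "integrable M (\<lambda>x. D x * F x)"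
    using Fint integrable_real_density[of D M F] Dnn rho_eq by simp
  have Dint: "integrable M D"
    using R.integrable_const[of "1::real"] integrable_real_density[of D M "\<lambda>_. 1"] Dnn rho_eq by simp
  have D1: "(\<integral>x. D x \<partial>M) = 1"
    using R.prob_space integral_real_density[of D M "\<lambda>_. 1"] Dnn rho_eq by simp
  have eq1: "(\<integral>x. F x \<partial>\<rho>) = (\<integral>x. D x * F x \<partial>M)"
    using integral_real_density[of D M F] Dnn rho_eq by simp
  have pw: "D x * F x \<le> exp (h x) / Z - D x" for x
  proof (cases "D x = 0")
    case True then show ?thesis using Zpos by simp
  next
    case False
    then have Dp: "D x > 0" using Dnn[of x] by simp
    have "F x = ln (exp (h x) / (D x * Z))" unfolding F_def using Dp Zpos
      by (simp add: ln_div ln_mult)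
    also have "\<dots> \<le> exp (h x) / (D x * Z) - 1" using Dp Zpos by (intro ln_le_minus_one) auto
    finally have "D x * F x \<le> D x * (exp (h x) / (D x * Z) - 1)" using Dp by (intro mult_left_mono) auto
    also have "\<dots> = exp (h x) / Z - D x" using Dp by (simp add: field_simps)
    finally show ?thesis .
  qed
  have "(\<integral>x. D x * F x \<partial>M) \<le> (\<integral>x. exp (h x) / Z - D x \<partial>M)"
    by (intro integral_mono FintM Bochner_Integration.integrable_diff Dint integrable_divide eint pw)
  also have "\<dots> = 0" using Dint eint D1 Zpos by (simp add: Z_def)
  finally have "(\<integral>x. F x \<partial>\<rho>) \<le> 0" using eq1 by simp
  moreover have "(\<integral>x. F x \<partial>\<rho>) = (\<integral>g. h g \<partial>\<rho>) - KL_divergence (exp 1) M \<rho> - ln Z"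
    unfolding F_def KLeq using hbr intlnD R.prob_space by simp
  ultimately show ?thesis by (simp add: Z_def)
qed


definition Wf :: "real \<Rightarrow> (nat \<Rightarrow> 'a \<Rightarrow> real) \<Rightarrow> nat \<Rightarrow> 'a \<Rightarrow> real" where
  "Wf \<eta> L t g = exp (- \<eta> * (\<Sum>s\<in>{1..<t}. L s g))"

definition Zf :: "'a measure \<Rightarrow> real \<Rightarrow> (nat \<Rightarrow> 'a \<Rightarrow> real) \<Rightarrow> nat \<Rightarrow> real" where
  "Zf M \<eta> L t = (\<integral>g. Wf \<eta> L t g \<partial>M)"

lemma ewa_prior_sets: "sets (ewa_prior \<pi> \<eta> L t) = sets \<pi>"
  by (induction \<pi> \<eta> L t rule: ewa_prior.induct) (simp_all add: ewa_update_def)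

locale ewa_setting =
  fixes M :: "'a measure" and \<eta> C :: real and T :: nat and L :: "nat \<Rightarrow> 'a \<Rightarrow> real"
  assumes M: "prob_space M" and eta: "\<eta> > 0"
    and Lm: "\<And>s. s \<in> {1..T} \<Longrightarrow> L s \<in> borel_measurable M"
    and Lb: "\<And>s g. s \<in> {1..T} \<Longrightarrow> g \<in> space M \<Longrightarrow> 0 \<le> L s g \<and> L s g \<le> C"
begin

interpretation M: prob_space M by (rule M)

lemma W_meas: "t \<le> Suc T \<Longrightarrow> Wf \<eta> L t \<in> borel_measurable M"
proof -
  assume t: "t \<le> Suc T"
  have [measurable]: "(\<lambda>g. \<Sum>s\<in>{1..<t}. L s g) \<in> borel_measurable M"
    by (rule borel_measurable_sum) (use t Lm in auto)
  show ?thesis unfolding Wf_def by measurable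
qed

lemma W_pos: "0 < Wf \<eta> L t g" unfolding Wf_def by simp

lemma W_le1: "t \<le> Suc T \<Longrightarrow> g \<in> space M \<Longrightarrow> Wf \<eta> L t g \<le> 1"
proof -
  assume t: "t \<le> Suc T" and g: "g \<in> space M"
  have "0 \<le> (\<Sum>s\<in>{1..<t}. L s g)" using t g Lb by (intro sum_nonneg) auto
  then show ?thesis unfolding Wf_def using eta by (simp add: mult_nonneg_nonneg)
qed

lemma W_int: "t \<le> Suc T \<Longrightarrow> integrable M (Wf \<eta> L t)"
  by (rule M.integrable_const_bound[where B=1]) (auto intro!: AE_I2 W_meas simp: W_le1 abs_of_pos W_pos)

lemma Z_pos: "t \<le> Suc T \<Longrightarrow> 0 < Zf M \<eta> L t"
  unfolding Zf_def using M.integral_less_AE_space[of "\<lambda>_. 0" "Wf \<eta> L t"] W_int M.emeasure_space_1 W_pos by simp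

lemma W_Suc: "1 \<le> t \<Longrightarrow> Wf \<eta> L (Suc t) g = Wf \<eta> L t g * exp (- \<eta> * L t g)"
  unfolding Wf_def by (simp add: exp_add[symmetric] algebra_simps)

lemma Z_1: "Zf M \<eta> L 1 = 1" unfolding Zf_def Wf_def by (simp add: M.prob_space)

lemma prior_closed:
  "1 \<le> t \<Longrightarrow> t \<le> Suc T \<Longrightarrow> ewa_prior M \<eta> L t = density M (\<lambda>g. ennreal (Wf \<eta> L t g / Zf M \<eta> L t))"
proof (induction t)
  case 0 then show ?case by simp
next
  case (Suc t)
  show ?case
  proof (cases t)
    case 0
    then show ?thesis using Z_1 by (simp add: Wf_def density_1)
  next
    case (Suc t')
    have t1: "1 \<le> t" "t \<le> Suc T" "t \<in> {1..T}" using Suc \<open>Suc t \<le> Suc T\<close> by auto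
    have IH: "ewa_prior M \<eta> L t = density M (\<lambda>g. ennreal (Wf \<eta> L t g / Zf M \<eta> L t))"
      using Suc.IH t1 by simp
    note [measurable] = W_meas[OF t1(2)] Lm[OF t1(3)]
    define I where "I = (\<integral>\<gamma>. exp (- \<eta> * L t \<gamma>) \<partial>ewa_prior M \<eta> L t)"
    have "I = (\<integral>\<gamma>. Wf \<eta> L t \<gamma> / Zf M \<eta> L t * exp (- \<eta> * L t \<gamma>) \<partial>M)"
      unfolding I_def IH using W_pos Z_pos[OF t1(2)]
      by (subst integral_real_density) (auto intro!: divide_nonneg_pos less_imp_le)
    also have "\<dots> = Zf M \<eta> L (Suc t) / Zf M \<eta> L t"
      unfolding Zf_def W_Suc[OF t1(1)] by simp
    finally have Ieq: "I = Zf M \<eta> L (Suc t) / Zf M \<eta> L t" .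
    have "ewa_prior M \<eta> L (Suc t) = ewa_update (ewa_prior M \<eta> L t) \<eta> (L t)"
      using Suc by simp
    also have "\<dots> = density (density M (\<lambda>g. ennreal (Wf \<eta> L t g / Zf M \<eta> L t)))
                 (\<lambda>g. ennreal (exp (- \<eta> * L t g) / I))"
      unfolding ewa_update_def I_def IH ..
    also have "\<dots> = density M (\<lambda>g. ennreal (Wf \<eta> L t g / Zf M \<eta> L t) * ennreal (exp (- \<eta> * L t g) / I))"
      by (intro density_density_eq) auto
    also have "\<dots> = density M (\<lambda>g. ennreal (Wf \<eta> L (Suc t) g / Zf M \<eta> L (Suc t)))"
    proof (intro density_cong)
      show "AE g in M. ennreal (Wf \<eta> L t g / Zf M \<eta> L t) * ennreal (exp (- \<eta> * L t g) / I) =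
          ennreal (Wf \<eta> L (Suc t) g / Zf M \<eta> L (Suc t))"
      proof (intro AE_I2)
        fix g assume "g \<in> space M"
        have z1: "Zf M \<eta> L t > 0" "Zf M \<eta> L (Suc t) > 0" using Z_pos t1 by auto
        have "ennreal (Wf \<eta> L t g / Zf M \<eta> L t) * ennreal (exp (- \<eta> * L t g) / I)
           = ennreal (Wf \<eta> L t g / Zf M \<eta> L t * (exp (- \<eta> * L t g) / I))"
          using W_pos z1 Ieq by (subst ennreal_mult) (auto intro: less_imp_le divide_pos_pos)
        also have "Wf \<eta> L t g / Zf M \<eta> L t * (exp (- \<eta> * L t g) / I) = Wf \<eta> L (Suc t) g / Zf M \<eta> L (Suc t)"
          unfolding Ieq W_Suc[OF t1(1)] using z1 by (simp add: field_simps)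
        finally show "ennreal (Wf \<eta> L t g / Zf M \<eta> L t) * ennreal (exp (- \<eta> * L t g) / I) =
          ennreal (Wf \<eta> L (Suc t) g / Zf M \<eta> L (Suc t))" .
      qed
    next
      show "(\<lambda>g. ennreal (Wf \<eta> L (Suc t) g / Zf M \<eta> L (Suc t))) \<in> borel_measurable M"
        using W_meas[of "Suc t"] \<open>Suc t \<le> Suc T\<close> by measurable
    qed auto
    finally show ?thesis .
  qed
qed

lemma prior_sets: "sets (ewa_prior M \<eta> L t) = sets M"
  by (rule ewa_prior_sets)

lemma prior_meas_iff: "f \<in> borel_measurable (ewa_prior M \<eta> L t) \<longleftrightarrow> f \<in> borel_measurable M"
  using measurable_cong_sets[OF prior_sets[of t] refl, of borel] by blast

lemma prior_space: "space (ewa_prior M \<eta> L t) = space M"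
  using sets_eq_imp_space_eq[OF prior_sets] .

lemma dens_nn: "t \<le> Suc T \<Longrightarrow> 0 \<le> Wf \<eta> L t g / Zf M \<eta> L t"
  using W_pos Z_pos by (auto intro: less_imp_le divide_pos_pos)

lemma prior_integral:
  fixes f :: "'a \<Rightarrow> real"
  assumes "1 \<le> t" "t \<le> Suc T" and [measurable]: "f \<in> borel_measurable M"
  shows "(\<integral>g. f g \<partial>ewa_prior M \<eta> L t) = (\<integral>g. Wf \<eta> L t g / Zf M \<eta> L t * f g \<partial>M)"
  unfolding prior_closed[OF assms(1,2)] using W_meas[OF assms(2)] dens_nn[OF assms(2)]
  by (subst integral_real_density) auto

lemma prior_integrable:
  fixes f :: "'a \<Rightarrow> real"
  assumes "1 \<le> t" "t \<le> Suc T" and "integrable M f"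
  shows "integrable (ewa_prior M \<eta> L t) f"
proof -
  note [measurable] = borel_measurable_integrable[OF assms(3)] W_meas[OF assms(2)]
  have "integrable M (\<lambda>g. Wf \<eta> L t g / Zf M \<eta> L t * f g)"
  proof (rule Bochner_Integration.integrable_bound[of _ "\<lambda>g. f g / Zf M \<eta> L t"])
    show "integrable M (\<lambda>g. f g / Zf M \<eta> L t)" using assms(3) by simp
    show "AE g in M. norm (Wf \<eta> L t g / Zf M \<eta> L t * f g) \<le> norm (f g / Zf M \<eta> L t)"
    proof (intro AE_I2)
      fix g assume g: "g \<in> space M"
      have z: "Zf M \<eta> L t > 0" using Z_pos assms by auto
      have "\<bar>Wf \<eta> L t g\<bar> * \<bar>f g\<bar> \<le> 1 * \<bar>f g\<bar>"
        using W_le1[OF assms(2) g] W_pos[of t g] by (intro mult_right_mono) auto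
      then show "norm (Wf \<eta> L t g / Zf M \<eta> L t * f g) \<le> norm (f g / Zf M \<eta> L t)"
        using z by (simp add: abs_mult divide_right_mono)
    qed
  qed measurable
  then show ?thesis
    unfolding prior_closed[OF assms(1,2)] using dens_nn[OF assms(2)]
    by (subst integrable_real_density) auto
qed

lemma prior_prob: assumes "1 \<le> t" "t \<le> Suc T" shows "prob_space (ewa_prior M \<eta> L t)"
proof (rule prob_spaceI)
  note [measurable] = W_meas[OF assms(2)]
  have z: "Zf M \<eta> L t > 0" using Z_pos assms by auto
  have "emeasure (ewa_prior M \<eta> L t) (space (ewa_prior M \<eta> L t)) =
        (\<integral>\<^sup>+g. ennreal (Wf \<eta> L t g / Zf M \<eta> L t) \<partial>M)"
    unfolding prior_closed[OF assms] by (simp add: emeasure_density nn_integral_density)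
  also have "\<dots> = ennreal (\<integral>g. Wf \<eta> L t g / Zf M \<eta> L t \<partial>M)"
    using W_int[OF assms(2)] dens_nn[OF assms(2)] by (intro nn_integral_eq_integral) auto
  also have "(\<integral>g. Wf \<eta> L t g / Zf M \<eta> L t \<partial>M) = 1"
    using z by (simp add: Zf_def)
  finally show "emeasure (ewa_prior M \<eta> L t) (space (ewa_prior M \<eta> L t)) = 1" by simp
qed

lemma L_int_prior: assumes t: "t \<in> {1..T}" and s: "1 \<le> s" "s \<le> Suc T"
  shows "integrable (ewa_prior M \<eta> L s) (L t)"
proof -
  interpret P: prob_space "ewa_prior M \<eta> L s" by (rule prior_prob[OF s])
  show ?thesis
    by (rule P.integrable_const_bound[where B=C]) (use Lb[OF t] Lm[OF t] in \<open>auto intro!: AE_I2 simp: prior_space prior_meas_iff\<close>)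
qed

lemma hoeff_step:
  assumes t: "t \<in> {1..T}"
  shows "ln (Zf M \<eta> L (Suc t)) - ln (Zf M \<eta> L t) \<le> - \<eta> * (\<integral>g. L t g \<partial>ewa_prior M \<eta> L t) + \<eta>\<^sup>2 * C\<^sup>2 / 8"
proof -
  have t1: "1 \<le> t" "t \<le> Suc T" using t by auto
  let ?P = "ewa_prior M \<eta> L t"
  interpret P: prob_space ?P by (rule prior_prob[OF t1])
  note Lmt[measurable] = Lm[OF t]
  have Lmt'[measurable]: "L t \<in> borel_measurable ?P" using Lmt prior_meas_iff by blast
  interpret H: interval_bounded_random_variable ?P "\<lambda>g. - L t g" "-C" 0
    by unfold_locales (use Lb[OF t] in \<open>auto intro!: AE_I2 simp: prior_space\<close>)
  define E where "E = (\<integral>g. L t g \<partial>?P)"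
  have LI: "integrable ?P (L t)" by (rule L_int_prior[OF t t1])
  have hb: "(\<integral>\<^sup>+g. ennreal (exp (\<eta> * (- L t g - (\<integral>g. - L t g \<partial>?P)))) \<partial>?P) \<le> ennreal (exp (\<eta>\<^sup>2 * (0 - - C)\<^sup>2 / 8))"
    by (rule H.Hoeffdings_lemma_nn_integral[OF eta])
  have eqf: "(\<lambda>g. exp (\<eta> * (- L t g - (\<integral>g. - L t g \<partial>?P)))) = (\<lambda>g. exp (\<eta> * E) * exp (- \<eta> * L t g))"
    by (auto simp: E_def exp_add[symmetric] algebra_simps)
  have ei: "integrable ?P (\<lambda>g. exp (- \<eta> * L t g))"
    by (rule P.integrable_const_bound[where B=1]) (use Lb[OF t] eta in \<open>auto intro!: AE_I2 simp: prior_space mult_nonneg_nonneg\<close>)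
  have "(\<integral>\<^sup>+g. ennreal (exp (\<eta> * E) * exp (- \<eta> * L t g)) \<partial>?P) = ennreal (\<integral>g. exp (\<eta> * E) * exp (- \<eta> * L t g) \<partial>?P)"
    using ei by (intro nn_integral_eq_integral) auto
  moreover have "(\<integral>\<^sup>+g. ennreal (exp (\<eta> * E) * exp (- \<eta> * L t g)) \<partial>?P) \<le> ennreal (exp (\<eta>\<^sup>2 * C\<^sup>2 / 8))"
    using hb by (simp add: E_def exp_add[symmetric] algebra_simps)
  ultimately have "ennreal (\<integral>g. exp (\<eta> * E) * exp (- \<eta> * L t g) \<partial>?P) \<le> ennreal (exp (\<eta>\<^sup>2 * C\<^sup>2 / 8))"
    by simp
  then have "exp (\<eta> * E) * (\<integral>g. exp (- \<eta> * L t g) \<partial>?P) \<le> exp (\<eta>\<^sup>2 * C\<^sup>2 / 8)"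
    by (simp add: ennreal_le_iff)
  moreover have "(\<integral>g. exp (- \<eta> * L t g) \<partial>?P) = Zf M \<eta> L (Suc t) / Zf M \<eta> L t"
    by (subst prior_integral[OF t1]) (auto simp: Zf_def W_Suc[OF t1(1)])
  moreover have "Zf M \<eta> L (Suc t) > 0" "Zf M \<eta> L t > 0" using Z_pos t1 t by auto
  ultimately have le: "exp (\<eta> * E) * (Zf M \<eta> L (Suc t) / Zf M \<eta> L t) \<le> exp (\<eta>\<^sup>2 * C\<^sup>2 / 8)"
    by simp
  have "ln (exp (\<eta> * E) * (Zf M \<eta> L (Suc t) / Zf M \<eta> L t)) \<le> ln (exp (\<eta>\<^sup>2 * C\<^sup>2 / 8))"
    using le \<open>Zf M \<eta> L (Suc t) > 0\<close> \<open>Zf M \<eta> L t > 0\<close> by (subst ln_le_cancel_iff) auto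
  then have "ln (exp (\<eta> * E) * (Zf M \<eta> L (Suc t) / Zf M \<eta> L t)) \<le> \<eta>\<^sup>2 * C\<^sup>2 / 8" by simp
  with \<open>Zf M \<eta> L (Suc t) > 0\<close> \<open>Zf M \<eta> L t > 0\<close> show ?thesis
    by (simp add: ln_mult ln_div E_def)
qed

lemma telescope:
  "ln (Zf M \<eta> L (Suc T)) \<le> - \<eta> * (\<Sum>t=1..T. \<integral>g. L t g \<partial>ewa_prior M \<eta> L t) + real T * (\<eta>\<^sup>2 * C\<^sup>2 / 8)"
proof -
  have "n \<le> T \<Longrightarrow> ln (Zf M \<eta> L (Suc n)) \<le> - \<eta> * (\<Sum>t=1..n. \<integral>g. L t g \<partial>ewa_prior M \<eta> L t) + real n * (\<eta>\<^sup>2 * C\<^sup>2 / 8)" for n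
  proof (induction n)
    case 0 then show ?case using Z_1 by simp
  next
    case (Suc n)
    have "ln (Zf M \<eta> L (Suc (Suc n))) - ln (Zf M \<eta> L (Suc n)) \<le> - \<eta> * (\<integral>g. L (Suc n) g \<partial>ewa_prior M \<eta> L (Suc n)) + \<eta>\<^sup>2 * C\<^sup>2 / 8"
      using Suc.prems by (intro hoeff_step) auto
    then show ?case using Suc by (simp add: algebra_simps)
  qed
  then show ?thesis by simp
qed

lemma core:
  assumes rho: "prob_space \<rho>" "sets \<rho> = sets M" "absolutely_continuous M \<rho>"
    "integrable \<rho> (entropy_density (exp 1) M \<rho>)"
  shows "(\<Sum>t=1..T. \<integral>g. L t g \<partial>ewa_prior M \<eta> L t)
     \<le> (\<integral>g. (\<Sum>t=1..T. L t g) \<partial>\<rho>) + real T * (\<eta> * C\<^sup>2 / 8) + KL_divergence (exp 1) M \<rho> / \<eta>"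
proof -
  define S where "S g = (\<Sum>t=1..T. L t g)" for g
  have Sm[measurable]: "S \<in> borel_measurable M" unfolding S_def
    by (rule borel_measurable_sum) (use Lm in auto)
  have Sb: "0 \<le> S g \<and> S g \<le> real T * C" if "g \<in> space M" for g
  proof -
    have "S g \<le> of_nat (card {1..T}) * C" unfolding S_def
      by (rule sum_bounded_above) (use Lb that in auto)
    moreover have "0 \<le> S g" unfolding S_def by (rule sum_nonneg) (use Lb that in auto)
    ultimately show ?thesis by simp
  qed
  have hb: "\<bar>- \<eta> * S g\<bar> \<le> \<eta> * (real T * C)" if "g \<in> space M" for g
    using Sb[OF that] eta by (simp add: abs_mult)
  have dv: "(\<integral>g. - \<eta> * S g \<partial>\<rho>) - KL_divergence (exp 1) M \<rho> \<le> ln (\<integral>g. exp (- \<eta> * S g) \<partial>M)"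
    by (rule dv_bound[OF M rho]) (use hb in auto)
  have "(\<integral>g. exp (- \<eta> * S g) \<partial>M) = Zf M \<eta> L (Suc T)"
    unfolding Zf_def Wf_def S_def by (simp add: atLeastLessThanSuc_atLeastAtMost)
  with dv telescope have "- \<eta> * (\<integral>g. S g \<partial>\<rho>) - KL_divergence (exp 1) M \<rho>
      \<le> - \<eta> * (\<Sum>t=1..T. \<integral>g. L t g \<partial>ewa_prior M \<eta> L t) + real T * (\<eta>\<^sup>2 * C\<^sup>2 / 8)"
    by simp
  then have "\<eta> * (\<Sum>t=1..T. \<integral>g. L t g \<partial>ewa_prior M \<eta> L t) \<le>
      \<eta> * ((\<integral>g. S g \<partial>\<rho>) + real T * (\<eta> * C\<^sup>2 / 8) + KL_divergence (exp 1) M \<rho> / \<eta>)"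
    using eta by (simp add: algebra_simps power2_eq_square)
  then show ?thesis using eta unfolding S_def by simp
qed

end


lemma jensen_sum:
  fixes P :: "'a measure" and q :: "nat \<Rightarrow> real \<Rightarrow> real" and p :: "nat \<Rightarrow> 'a \<Rightarrow> real"
  assumes P: "prob_space P" and cv: "\<And>i. i \<in> I \<Longrightarrow> convex_on UNIV (q i)" and fin: "finite I"
    and pint: "\<And>i. i \<in> I \<Longrightarrow> integrable P (p i)" and Fint: "integrable P F"
    and eq: "\<And>g. g \<in> space P \<Longrightarrow> (\<Sum>i\<in>I. q i (p i g)) = F g"
  shows "(\<Sum>i\<in>I. q i (\<integral>g. p i g \<partial>P)) \<le> (\<integral>g. F g \<partial>P)"
proof -
  interpret P: prob_space P by fact
  define c where "c i = (\<integral>g. p i g \<partial>P)" for i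
  define k where "k i = Inf ((\<lambda>t. (q i (c i) - q i t) / (c i - t)) ` ({c i<..} \<inter> UNIV))" for i
  have sup: "q i (c i) + k i * (z - c i) \<le> q i z" if "i \<in> I" for i z
    unfolding k_def by (rule convex_le_Inf_differential[OF cv[OF that]]) auto
  have "(\<integral>g. (\<Sum>i\<in>I. q i (c i) + k i * (p i g - c i)) \<partial>P) \<le> (\<integral>g. F g \<partial>P)"
  proof (rule integral_mono)
    show "integrable P (\<lambda>g. \<Sum>i\<in>I. q i (c i) + k i * (p i g - c i))"
      using pint by (intro Bochner_Integration.integrable_sum) auto
    show "integrable P F" by fact
    fix g assume g: "g \<in> space P"
    have "(\<Sum>i\<in>I. q i (c i) + k i * (p i g - c i)) \<le> (\<Sum>i\<in>I. q i (p i g))"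
      by (intro sum_mono sup)
    also have "\<dots> = F g" by (rule eq[OF g])
    finally show "(\<Sum>i\<in>I. q i (c i) + k i * (p i g - c i)) \<le> F g" .
  qed
  also have "(\<integral>g. (\<Sum>i\<in>I. q i (c i) + k i * (p i g - c i)) \<partial>P) = (\<Sum>i\<in>I. \<integral>g. q i (c i) + k i * (p i g - c i) \<partial>P)"
    using pint by (intro Bochner_Integration.integral_sum) auto
  also have "\<dots> = (\<Sum>i\<in>I. q i (c i))"
  proof (rule sum.cong[OF refl])
    fix i assume i: "i \<in> I"
    show "(\<integral>g. q i (c i) + k i * (p i g - c i) \<partial>P) = q i (c i)"
      using pint[OF i] P.prob_space by (simp add: c_def)
  qed
  finally show ?thesis by (simp add: c_def)
qed



lemma ereal_regret_aux: "ereal a - b \<le> ereal c \<Longrightarrow> ereal a \<le> b + ereal c"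
  by (cases b) auto

theorem theorem4:
  fixes G :: "('x \<Rightarrow> 'z) measure"
    and H :: "('z \<Rightarrow> real) set"
    and loss :: "real \<Rightarrow> 'y \<Rightarrow> real"
    and alg :: "('x \<Rightarrow> 'z) \<Rightarrow> 'x list \<Rightarrow> 'y list \<Rightarrow> real"
    and T :: nat and m :: "nat \<Rightarrow> nat"
    and x :: "nat \<Rightarrow> nat \<Rightarrow> 'x" and y :: "nat \<Rightarrow> nat \<Rightarrow> 'y"
    and \<beta> :: "('x \<Rightarrow> 'z) \<Rightarrow> nat \<Rightarrow> real"
    and C \<eta> :: real
    and \<pi>1 :: "('x \<Rightarrow> 'z) measure"
  assumes convex: "\<And>yy. convex_on UNIV (\<lambda>p. loss p yy)"
    and T_pos: "T > 0"
    and m_pos: "\<And>t. t \<in> {1..T} \<Longrightarrow> m t > 0"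
    and prior: "prob_space \<pi>1" "sets \<pi>1 = sets G"
    and eta_pos: "\<eta> > 0"
    and meas_pred: "\<And>t i. t \<in> {1..T} \<Longrightarrow> i \<in> {1..m t} \<Longrightarrow>
                      (\<lambda>g. within_pred alg x y g t i) \<in> borel_measurable G"
    and int_pred: "\<And>t i. t \<in> {1..T} \<Longrightarrow> i \<in> {1..m t} \<Longrightarrow>
                      integrable \<pi>1 (\<lambda>g. within_pred alg x y g t i)"
    and meas_L: "\<And>t. t \<in> {1..T} \<Longrightarrow> (\<lambda>g. Lhat loss alg x y m g t) \<in> borel_measurable G"
    and meas_best: "\<And>t. t \<in> {1..T} \<Longrightarrow> (\<lambda>g. best_in_H loss H x y m g t) \<in> borel_measurable G"
    and meas_beta: "\<And>t. t \<in> {1..T} \<Longrightarrow> (\<lambda>g. \<beta> g (m t)) \<in> borel_measurable G"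
    and L_bounds: "\<And>t g. t \<in> {1..T} \<Longrightarrow> g \<in> space G \<Longrightarrow>
                      0 \<le> Lhat loss alg x y m g t \<and> Lhat loss alg x y m g t \<le> C"
    and regret_bound: "\<And>t g. t \<in> {1..T} \<Longrightarrow> g \<in> space G \<Longrightarrow>
                      regret loss alg H x y m g t \<le> ereal (\<beta> g (m t))"
  shows "ereal ((1 / real T) * (\<Sum>t=1..T. (1 / real (m t)) *
            (\<Sum>i=1..m t. loss (ewa_ll_pred loss alg \<pi>1 \<eta> x y m t i) (y t i))))
         \<le> (INF \<rho>\<in>{\<rho>. prob_space \<rho> \<and> sets \<rho> = sets G}.
              enn2ereal (\<integral>\<^sup>+ g. e2ennreal
                  (ereal (1 / real T) * (\<Sum>t=1..T. best_in_H loss H x y m g t)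
                   + ereal ((1 / real T) * (\<Sum>t=1..T. \<beta> g (m t)))) \<partial>\<rho>)
              + ereal (\<eta> * C\<^sup>2 / 8)
              + KL_div \<rho> \<pi>1 / ereal (\<eta> * real T))"
proof -
  define L where "L s g = Lhat loss alg x y m g s" for s g
  have spaceG: "space \<pi>1 = space G" using sets_eq_imp_space_eq[OF prior(2)] .
  have measG: "\<And>f. f \<in> borel_measurable \<pi>1 \<longleftrightarrow> f \<in> borel_measurable G"
    using measurable_cong_sets[OF prior(2) refl, of borel] by blast
  interpret E: ewa_setting \<pi>1 \<eta> C T L
  proof (rule ewa_setting.intro)
    show "prob_space \<pi>1" using prior by auto
    show "\<eta> > 0" using eta_pos by auto
    show "L s \<in> borel_measurable \<pi>1" if "s \<in> {1..T}" for s
      using meas_L[OF that] measG unfolding L_def by blast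
    show "0 \<le> L s g \<and> L s g \<le> C" if "s \<in> {1..T}" "g \<in> space \<pi>1" for s g
      using L_bounds[OF that(1)] that(2) spaceG unfolding L_def by blast
  qed
  have Lfun: "(\<lambda>s g. Lhat loss alg x y m g s) = L" by (intro ext) (simp add: L_def)
  have Lt: "L t = (\<lambda>g. Lhat loss alg x y m g t)" for t by (intro ext) (simp add: L_def)
  define lhs where "lhs t = (1 / real (m t)) * (\<Sum>i=1..m t. loss (ewa_ll_pred loss alg \<pi>1 \<eta> x y m t i) (y t i))" for t
  have task: "lhs t \<le> (\<integral>g. L t g \<partial>ewa_prior \<pi>1 \<eta> L t)" if t: "t \<in> {1..T}" for t
  proof -
    have t1: "1 \<le> t" "t \<le> Suc T" using t by auto
    have mp: "real (m t) > 0" using m_pos[OF t] by simp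
    have "(\<Sum>i\<in>{1..m t}. loss (\<integral>g. within_pred alg x y g t i \<partial>ewa_prior \<pi>1 \<eta> L t) (y t i))
        \<le> (\<integral>g. real (m t) * L t g \<partial>ewa_prior \<pi>1 \<eta> L t)"
    proof (rule jensen_sum[where q="\<lambda>i p. loss p (y t i)"])
      show "prob_space (ewa_prior \<pi>1 \<eta> L t)" by (rule E.prior_prob[OF t1])
      show "integrable (ewa_prior \<pi>1 \<eta> L t) (\<lambda>g. within_pred alg x y g t i)" if "i \<in> {1..m t}" for i
        by (rule E.prior_integrable[OF t1 int_pred[OF t that]])
      show "integrable (ewa_prior \<pi>1 \<eta> L t) (\<lambda>g. real (m t) * L t g)"
        using E.L_int_prior[OF t t1] by simp
      show "(\<Sum>i\<in>{1..m t}. loss (within_pred alg x y g t i) (y t i)) = real (m t) * L t g" for g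
        using mp by (simp add: L_def Lhat_def)
    qed (use convex in auto)
    also have "\<dots> = real (m t) * (\<integral>g. L t g \<partial>ewa_prior \<pi>1 \<eta> L t)" by simp
    finally show ?thesis using mp
      by (simp add: lhs_def ewa_ll_pred_def Lfun field_simps)
  qed
  have sumle: "(\<Sum>t=1..T. lhs t) \<le> (\<Sum>t=1..T. \<integral>g. L t g \<partial>ewa_prior \<pi>1 \<eta> L t)"
    by (intro sum_mono task) auto
  have Tp: "real T > 0" using T_pos by simp
  have foldlhs: "(\<Sum>t=1..T. (1 / real (m t)) *
            (\<Sum>i=1..m t. loss (ewa_ll_pred loss alg \<pi>1 \<eta> x y m t i) (y t i))) = (\<Sum>t=1..T. lhs t)"
    by (simp add: lhs_def)
  show ?thesis unfolding foldlhs
  proof (rule INF_greatest)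
    fix \<rho> assume "\<rho> \<in> {\<rho>. prob_space \<rho> \<and> sets \<rho> = sets G}"
    then have R: "prob_space \<rho>" and Rs: "sets \<rho> = sets G" by auto
    show "ereal ((1 / real T) * (\<Sum>t=1..T. lhs t)) \<le> enn2ereal (\<integral>\<^sup>+ g. e2ennreal
                  (ereal (1 / real T) * (\<Sum>t=1..T. best_in_H loss H x y m g t)
                   + ereal ((1 / real T) * (\<Sum>t=1..T. \<beta> g (m t)))) \<partial>\<rho>)
              + ereal (\<eta> * C\<^sup>2 / 8)
              + KL_div \<rho> \<pi>1 / ereal (\<eta> * real T)"
    proof (cases "sets \<rho> = sets \<pi>1 \<and> absolutely_continuous \<pi>1 \<rho> \<and> integrable \<rho> (entropy_density (exp 1) \<pi>1 \<rho>)")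
      case False
      then have "KL_div \<rho> \<pi>1 = \<infinity>" by (simp add: KL_div_def)
      moreover have "\<eta> * real T \<ge> 0" using eta_pos by simp
      ultimately show ?thesis by (simp add: enn2ereal_nonneg)
    next
      case True
      then have Rs1: "sets \<rho> = sets \<pi>1" and ac: "absolutely_continuous \<pi>1 \<rho>"
        and ent: "integrable \<rho> (entropy_density (exp 1) \<pi>1 \<rho>)" by auto
      define K where "K = KL_divergence (exp 1) \<pi>1 \<rho>"
      have KL: "KL_div \<rho> \<pi>1 = ereal K" using True by (simp add: KL_div_def K_def)
      interpret R: prob_space \<rho> by fact
      have spR: "space \<rho> = space G" using sets_eq_imp_space_eq[OF Rs] .
      have measR: "\<And>f. f \<in> borel_measurable \<rho> \<longleftrightarrow> f \<in> borel_measurable G"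
        using measurable_cong_sets[OF Rs refl, of borel] by blast
      define S where "S g = (\<Sum>t=1..T. L t g)" for g
      have Lint: "integrable \<rho> (L t)" if t: "t \<in> {1..T}" for t
        by (rule R.integrable_const_bound[where B=C])
          (use L_bounds[OF t] meas_L[OF t] in \<open>auto intro!: AE_I2 simp: spR measR L_def Lt\<close>)
      have Sint: "integrable \<rho> S" unfolding S_def using Lint by (intro Bochner_Integration.integrable_sum) auto
      have Snn: "0 \<le> S g" if "g \<in> space \<rho>" for g
        unfolding S_def using L_bounds that spR by (intro sum_nonneg) (auto simp: L_def)
      have core: "(\<Sum>t=1..T. \<integral>g. L t g \<partial>ewa_prior \<pi>1 \<eta> L t) \<le> (\<integral>g. S g \<partial>\<rho>) + real T * (\<eta> * C\<^sup>2 / 8) + K / \<eta>"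
        unfolding S_def K_def by (rule E.core[OF R Rs1 ac ent])
      have real_ineq: "(1 / real T) * (\<Sum>t=1..T. lhs t) \<le> (\<integral>g. (1 / real T) * S g \<partial>\<rho>) + \<eta> * C\<^sup>2 / 8 + K / (\<eta> * real T)"
      proof -
        have "(1 / real T) * (\<Sum>t=1..T. lhs t) \<le> (1 / real T) * ((\<integral>g. S g \<partial>\<rho>) + real T * (\<eta> * C\<^sup>2 / 8) + K / \<eta>)"
          using sumle core Tp by (intro mult_left_mono) auto
        also have "\<dots> = (\<integral>g. (1 / real T) * S g \<partial>\<rho>) + \<eta> * C\<^sup>2 / 8 + K / (\<eta> * real T)"
          using Tp by (simp add: field_simps)
        finally show ?thesis .
      qed
      have pw: "ereal ((1 / real T) * S g) \<le> ereal (1 / real T) * (\<Sum>t=1..T. best_in_H loss H x y m g t)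
                   + ereal ((1 / real T) * (\<Sum>t=1..T. \<beta> g (m t)))" if g: "g \<in> space \<rho>" for g
      proof -
        have each: "ereal (L t g) \<le> best_in_H loss H x y m g t + ereal (\<beta> g (m t))" if t: "t \<in> {1..T}" for t
          using regret_bound[OF t] g spR by (intro ereal_regret_aux) (auto simp: regret_def L_def)
        have "ereal (S g) = (\<Sum>t=1..T. ereal (L t g))" by (simp add: S_def)
        also have "\<dots> \<le> (\<Sum>t=1..T. best_in_H loss H x y m g t + ereal (\<beta> g (m t)))"
          by (intro sum_mono each) auto
        also have "\<dots> = (\<Sum>t=1..T. best_in_H loss H x y m g t) + ereal (\<Sum>t=1..T. \<beta> g (m t))"
          by (simp add: sum.distrib)
        finally have le: "ereal (S g) \<le> (\<Sum>t=1..T. best_in_H loss H x y m g t) + ereal (\<Sum>t=1..T. \<beta> g (m t))" .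
        have "ereal ((1 / real T) * S g) = ereal (1 / real T) * ereal (S g)" by simp
        also have "\<dots> \<le> ereal (1 / real T) * ((\<Sum>t=1..T. best_in_H loss H x y m g t) + ereal (\<Sum>t=1..T. \<beta> g (m t)))"
          by (rule ereal_mult_left_mono[OF le]) simp
        also have "\<dots> = ereal (1 / real T) * (\<Sum>t=1..T. best_in_H loss H x y m g t) + ereal ((1 / real T) * (\<Sum>t=1..T. \<beta> g (m t)))"
          by (subst ereal_pos_distrib) auto
        finally show ?thesis .
      qed
      have "ennreal (\<integral>g. (1 / real T) * S g \<partial>\<rho>) = (\<integral>\<^sup>+g. ennreal ((1 / real T) * S g) \<partial>\<rho>)"
        using Sint Snn Tp by (intro nn_integral_eq_integral[symmetric]) auto
      also have "\<dots> \<le> (\<integral>\<^sup>+ g. e2ennreal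
                  (ereal (1 / real T) * (\<Sum>t=1..T. best_in_H loss H x y m g t)
                   + ereal ((1 / real T) * (\<Sum>t=1..T. \<beta> g (m t)))) \<partial>\<rho>)"
        by (intro nn_integral_mono) (metis e2ennreal_ereal e2ennreal_mono pw)
      finally have intle: "ereal (\<integral>g. (1 / real T) * S g \<partial>\<rho>) \<le> enn2ereal (\<integral>\<^sup>+ g. e2ennreal
                  (ereal (1 / real T) * (\<Sum>t=1..T. best_in_H loss H x y m g t)
                   + ereal ((1 / real T) * (\<Sum>t=1..T. \<beta> g (m t)))) \<partial>\<rho>)"
        using Snn Tp by (subst (asm) less_eq_ennreal.rep_eq) (simp add: enn2ereal_ennreal integral_nonneg)
      have kl: "KL_div \<rho> \<pi>1 / ereal (\<eta> * real T) = ereal (K / (\<eta> * real T))"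
        using KL eta_pos T_pos by simp
      have "ereal ((1 / real T) * (\<Sum>t=1..T. lhs t)) \<le> ereal (\<integral>g. (1 / real T) * S g \<partial>\<rho>) + ereal (\<eta> * C\<^sup>2 / 8) + ereal (K / (\<eta> * real T))"
        using real_ineq by simp
      also have "\<dots> \<le> enn2ereal (\<integral>\<^sup>+ g. e2ennreal
                  (ereal (1 / real T) * (\<Sum>t=1..T. best_in_H loss H x y m g t)
                   + ereal ((1 / real T) * (\<Sum>t=1..T. \<beta> g (m t)))) \<partial>\<rho>) + ereal (\<eta> * C\<^sup>2 / 8) + ereal (K / (\<eta> * real T))"
        by (intro add_right_mono intle)
      finally show ?thesis unfolding kl .
    qed
  qed
qed

end
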